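(* Let $d\ge 1$ be an integer and let $\mathbb{T}_d$ be the tree in which every vertex has degree $d+1$, with a distinguished vertex $\mathcal{O}$ (the origin). Consider the cone percolation process on $\mathbb{T}_d$ with radius of influence $R$, and let $I$ be the set of vertices reached by it. If $\mathbb{E}(d^R) < 2-\frac{1}{d}$, then $$\frac{d+\mathbb{E}(d^R)-p_0}{d\,[1-\mathbb{E}(d^R)+p_0]}\ \le\ \mathbb{E}(|I|)\ \le\ \frac{\mathbb{E}(d^R)+d-2}{2d-1-d\,\mathbb{E}(d^R)}.$$
   Context: Cone percolation process: Let $\mathbb{T}$ be a tree with origin $\mathcal{O}$ and graph distance $d(\cdot,\cdot)$. Write $u\le v$ if $u$ lies on the path from $\mathcal{O}$ to $v$. Let $R$ be a random variable with values in $\{0,1,2,\dots\}$, $p_k=\mathbb{P}(R=k)$, and assume $p_0\in(0,1)$. Let $\{R_v\}_{v}$ be i.i.d. copies of $R$ indexed by the vertices. For each vertex $u$ let $B_u=\{v: u\le v,\ d(u,v)\le R_u\}$. Set $I_0=\{\mathcal{O}\}$, $I_{n+1}=\bigcup_{u\in I_n}B_u$ for $n\ge 0$, and $I=\bigcup_{n\ge0}I_n$. *)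

theory Defs
  imports "HOL-Probability.Probability"
begin

text \<open>The tree T_d rooted at the origin: vertices are finite words;
  the origin is the empty word, which has d+1 children; every other vertex has
  d children (so every vertex has degree d+1). u is below v (u on the path from
  the origin to v) iff u is a prefix of v, and then d(u,v) = length v - length u.\<close>

definition tree_vert :: "nat \<Rightarrow> nat list set" where
  "tree_vert d = {xs. \<forall>i<length xs. xs ! i < (if i = 0 then d + 1 else d)}"

definition anc_le :: "nat list \<Rightarrow> nat list \<Rightarrow> bool" where
  "anc_le u v \<longleftrightarrow> (\<exists>w. v = u @ w)"

definition cone_ball :: "nat \<Rightarrow> (nat list \<Rightarrow> nat) \<Rightarrow> nat list \<Rightarrow> nat list set" where
  "cone_ball d r u = {v \<in> tree_vert d. anc_le u v \<and> length v - length u \<le> r u}"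

fun cone_gen :: "nat \<Rightarrow> (nat list \<Rightarrow> nat) \<Rightarrow> nat \<Rightarrow> nat list set" where
  "cone_gen d r 0 = {[]}"
| "cone_gen d r (Suc n) = (\<Union>u\<in>cone_gen d r n. cone_ball d r u)"

definition cone_reached :: "nat \<Rightarrow> (nat list \<Rightarrow> nat) \<Rightarrow> nat list set" where
  "cone_reached d r = (\<Union>n. cone_gen d r n)"

end

theory Submission
  imports Defs
begin

inductive_set creach :: "nat \<Rightarrow> (nat list \<Rightarrow> nat) \<Rightarrow> nat list \<Rightarrow> nat list set"
  for d r u where
  base: "u \<in> creach d r u"
| step: "y \<in> creach d r u \<Longrightarrow> v \<in> cone_ball d r y \<Longrightarrow> v \<in> creach d r u"

lemma anc_le_refl[simp]: "anc_le u u" by (simp add: anc_le_def)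
lemma anc_le_trans: "anc_le a b \<Longrightarrow> anc_le b c \<Longrightarrow> anc_le a c"
  by (auto simp: anc_le_def)
lemma anc_le_length: "anc_le a b \<Longrightarrow> length a \<le> length b"
  by (auto simp: anc_le_def)
lemma anc_le_eq_len: "anc_le a v \<Longrightarrow> anc_le b v \<Longrightarrow> length a = length b \<Longrightarrow> a = b"
  by (auto simp: anc_le_def)

lemma cone_reached_creach: "cone_reached d r = creach d r []"
proof
  have "cone_gen d r n \<subseteq> creach d r []" for n
    by (induction n) (auto intro: creach.intros)
  then show "cone_reached d r \<subseteq> creach d r []" unfolding cone_reached_def by auto
next
  show "creach d r [] \<subseteq> cone_reached d r"
  proof
    fix v assume "v \<in> creach d r []"
    then show "v \<in> cone_reached d r"
    proof induction
      case base then show ?case unfolding cone_reached_def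
        by (auto intro: exI[of _ 0])
    next
      case (step y v)
      then obtain n where "y \<in> cone_gen d r n" unfolding cone_reached_def by auto
      then have "v \<in> cone_gen d r (Suc n)" using step by auto
      then show ?case unfolding cone_reached_def by blast
    qed
  qed
qed

lemma creach_sub: assumes x: "x \<in> tree_vert d" and v: "v \<in> creach d r x"
  shows "v \<in> tree_vert d \<and> anc_le x v"
  using v by (induction rule: creach.induct) (auto simp: x cone_ball_def intro: anc_le_trans)

lemma creach_trans: "y \<in> creach d r x \<Longrightarrow> creach d r y \<subseteq> creach d r x"
proof
  fix v assume y: "y \<in> creach d r x" assume "v \<in> creach d r y"
  then show "v \<in> creach d r x" using y
    by (induction rule: creach.induct) (auto intro: creach.intros)
qed

lemma creach_local:
  assumes "x \<in> tree_vert d" "v \<in> creach d r x"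
    "\<And>y. y \<in> tree_vert d \<Longrightarrow> anc_le x y \<Longrightarrow> anc_le y v \<Longrightarrow> r y = r' y"
  shows "v \<in> creach d r' x"
  using assms(2,3)
proof (induction rule: creach.induct)
  case base show ?case by (rule creach.base)
next
  case (step y v)
  have y: "y \<in> tree_vert d" "anc_le x y" using creach_sub[OF assms(1) step(1)] by auto
  have yv: "anc_le y v" using step(2) by (auto simp: cone_ball_def)
  have "y \<in> creach d r' x" using step(3) step(4) yv by (meson anc_le_trans)
  moreover have "v \<in> cone_ball d r' y" using step(2) step(4)[OF y yv] by (auto simp: cone_ball_def)
  ultimately show ?case by (rule creach.step)
qed

lemma creach_upper:
  "creach d r x \<subseteq> insert x (\<Union>y\<in>cone_ball d r x - {x}. creach d r y)"
proof
  fix v assume "v \<in> creach d r x"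
  then show "v \<in> insert x (\<Union>y\<in>cone_ball d r x - {x}. creach d r y)"
  proof induction
    case base then show ?case by simp
  next
    case (step y v)
    show ?case
    proof (cases "y = x")
      case True
      then show ?thesis using step by (cases "v = x") (auto intro: creach.base)
    next
      case False
      then obtain z where "z \<in> cone_ball d r x - {x}" "y \<in> creach d r z" using step by auto
      then show ?thesis using step(2) by (auto intro: creach.step)
    qed
  qed
qed

lemma finite_tree_le: "finite {v \<in> tree_vert d. length v \<le> N}"
proof -
  have "{v \<in> tree_vert d. length v \<le> N} \<subseteq> {xs. set xs \<subseteq> {..d} \<and> length xs \<le> N}"
  proof safe
    fix xs a assume xs: "xs \<in> tree_vert d" and a: "a \<in> set xs"
    then obtain i where i: "i < length xs" "xs ! i = a" by (auto simp: in_set_conv_nth)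
    then have "xs ! i < (if i = 0 then d + 1 else d)" using xs by (auto simp: tree_vert_def)
    then show "a \<le> d" using i by (auto split: if_splits)
  qed
  then show ?thesis by (rule finite_subset) (rule finite_lists_length_le, simp)
qed

definition lev :: "nat \<Rightarrow> nat list \<Rightarrow> nat \<Rightarrow> nat list set" where
  "lev d u j = {v \<in> tree_vert d. anc_le u v \<and> length v = length u + j}"

lemma tree_vert_append:
  assumes "u \<in> tree_vert d" "u \<noteq> []"
  shows "u @ z \<in> tree_vert d \<longleftrightarrow> set z \<subseteq> {..<d}"
proof
  assume h: "u @ z \<in> tree_vert d"
  show "set z \<subseteq> {..<d}"
  proof
    fix a assume "a \<in> set z"
    then obtain i where i: "i < length z" "z ! i = a" by (auto simp: in_set_conv_nth)
    have all: "\<And>j. j < length (u @ z) \<Longrightarrow> (u @ z) ! j < (if j = 0 then d + 1 else d)"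
      using h by (simp add: tree_vert_def)
    have "(u @ z) ! (length u + i) < (if length u + i = 0 then d + 1 else d)"
      by (rule all) (use i in simp)
    then show "a \<in> {..<d}" using i assms(2) by (auto simp: nth_append)
  qed
next
  assume h: "set z \<subseteq> {..<d}"
  show "u @ z \<in> tree_vert d" unfolding tree_vert_def
  proof safe
    fix i assume i: "i < length (u @ z)"
    show "(u @ z) ! i < (if i = 0 then d + 1 else d)"
    proof (cases "i < length u")
      case True then show ?thesis using assms(1) by (auto simp: nth_append tree_vert_def)
    next
      case False
      then have "z ! (i - length u) \<in> set z" using i by auto
      then show ?thesis using False h assms(2) by (auto simp: nth_append)
    qed
  qed
qed

lemma lev_nonroot:
  assumes "u \<in> tree_vert d" "u \<noteq> []"
  shows "lev d u j = (\<lambda>z. u @ z) ` {z. set z \<subseteq> {..<d} \<and> length z = j}"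
  using tree_vert_append[OF assms] unfolding lev_def anc_le_def by auto

lemma card_lev_nonroot:
  assumes "u \<in> tree_vert d" "u \<noteq> []"
  shows "card (lev d u j) = d ^ j"
  unfolding lev_nonroot[OF assms]
  by (subst card_image) (auto simp: inj_on_def card_lists_length_eq)

lemma tree_vert_Cons: "a # z \<in> tree_vert d \<longleftrightarrow> a < d + 1 \<and> set z \<subseteq> {..<d}"
proof -
  have "a # z \<in> tree_vert d \<longleftrightarrow> a < d + 1 \<and> (\<forall>i<length z. z ! i < d)"
    unfolding tree_vert_def
    by (simp add: All_less_Suc2)
  moreover have "set z \<subseteq> {..<d} \<longleftrightarrow> (\<forall>i<length z. z ! i < d)"
    by (auto simp: subset_iff in_set_conv_nth)
  ultimately show ?thesis by simp
qed

lemma lev_root: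
  "lev d [] (Suc j) = (\<lambda>(a, z). a # z) ` ({..<d+1} \<times> {z. set z \<subseteq> {..<d} \<and> length z = j})"
proof -
  have "v \<in> lev d [] (Suc j) \<longleftrightarrow> v \<in> (\<lambda>(a, z). a # z) ` ({..<d+1} \<times> {z. set z \<subseteq> {..<d} \<and> length z = j})" for v
  proof (cases v)
    case Nil then show ?thesis by (auto simp: lev_def)
  next
    case (Cons a z) then show ?thesis by (auto simp: lev_def anc_le_def tree_vert_Cons)
  qed
  then show ?thesis by blast
qed

lemma card_lev_root: "card (lev d [] (Suc j)) = (d + 1) * d ^ j"
  unfolding lev_root
  by (subst card_image) (auto simp: inj_on_def card_lists_length_eq card_cartesian_product)

lemma finite_lev: "finite (lev d u j)"
  by (rule finite_subset[OF _ finite_tree_le[of d "length u + j"]]) (auto simp: lev_def)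

definition ballS :: "nat \<Rightarrow> nat list \<Rightarrow> nat \<Rightarrow> nat list set" where
  "ballS d u k = {v \<in> tree_vert d. anc_le u v \<and> v \<noteq> u \<and> length v \<le> length u + k}"

lemma ballS_UN: "ballS d u k = (\<Union>j\<in>{1..k}. lev d u j)"
proof -
  have "v \<in> ballS d u k \<longleftrightarrow> (\<exists>j\<in>{1..k}. v \<in> lev d u j)" for v
  proof
    assume v: "v \<in> ballS d u k"
    then obtain w where w: "v = u @ w" "w \<noteq> []" unfolding ballS_def anc_le_def by auto
    then have "v \<in> lev d u (length w)" "length w \<in> {1..k}" using v
      by (auto simp: ballS_def lev_def anc_le_def Suc_le_eq)
    then show "\<exists>j\<in>{1..k}. v \<in> lev d u j" by blast
  next
    assume "\<exists>j\<in>{1..k}. v \<in> lev d u j"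
    then show "v \<in> ballS d u k" unfolding ballS_def lev_def by auto
  qed
  then show ?thesis by blast
qed

lemma card_ballS:
  "card (ballS d u k) = (\<Sum>j\<in>{1..k}. card (lev d u j))"
  unfolding ballS_UN
  apply (rule card_UN_disjoint)
    apply simp
   apply (simp add: finite_lev)
  apply (auto simp: lev_def)
  done

lemma cone_ball_minus: "cone_ball d r u - {u} = ballS d u (r u)"
  unfolding cone_ball_def ballS_def by (auto dest: anc_le_length)

abbreviation C :: "nat list set \<Rightarrow> ennreal" where
  "C A \<equiv> emeasure (count_space UNIV) A"

definition bdS :: "nat \<Rightarrow> nat list \<Rightarrow> nat \<Rightarrow> nat list set" where
  "bdS d u k = (if k = 0 then {} else lev d u k)"

lemma finite_ballS: "finite (ballS d u k)"
  by (rule finite_subset[OF _ finite_tree_le[of d "length u + k"]]) (auto simp: ballS_def)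

lemma lower_pointwise:
  assumes u: "u \<in> tree_vert d"
  shows "1 + (\<Sum>w\<in>bdS d u (r u). C (creach d r w)) \<le> C (creach d r u)"
proof -
  let ?B = "bdS d u (r u)"
  have fin: "finite ?B" by (simp add: bdS_def finite_lev)
  have Bsub: "w \<in> ?B \<Longrightarrow> w \<in> cone_ball d r u \<and> length u < length w \<and> w \<in> tree_vert d" for w
    by (auto simp: bdS_def lev_def cone_ball_def split: if_splits)
  have sub: "insert u (\<Union>w\<in>?B. creach d r w) \<subseteq> creach d r u"
    using Bsub by (auto intro: creach.intros dest!: creach_trans[OF creach.step[OF creach.base]])
  have nu: "u \<notin> (\<Union>w\<in>?B. creach d r w)"
  proof
    assume "u \<in> (\<Union>w\<in>?B. creach d r w)"
    then obtain w where "w \<in> ?B" "u \<in> creach d r w" by auto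
    then show False using Bsub creach_sub anc_le_length by (metis not_le)
  qed
  have disj: "disjoint_family_on (\<lambda>w. creach d r w) ?B"
    unfolding disjoint_family_on_def
  proof safe
    fix w w' v assume w: "w \<in> ?B" "w' \<in> ?B" "w \<noteq> w'" "v \<in> creach d r w" "v \<in> creach d r w'"
    have "anc_le w v" "anc_le w' v" using w Bsub creach_sub by blast+
    moreover have "length w = length w'" using w by (auto simp: bdS_def lev_def split: if_splits)
    ultimately show "v \<in> {}" using anc_le_eq_len w(3) by blast
  qed
  have "C (insert u (\<Union>w\<in>?B. creach d r w)) = C {u} + C (\<Union>w\<in>?B. creach d r w)"
    using nu by (subst plus_emeasure) auto
  also have "C {u} = 1" by simp
  also have "C (\<Union>w\<in>?B. creach d r w) = (\<Sum>w\<in>?B. C (creach d r w))"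
    by (rule sum_emeasure[symmetric]) (use fin disj in auto)
  finally have "C (insert u (\<Union>w\<in>?B. creach d r w)) = 1 + (\<Sum>w\<in>?B. C (creach d r w))" .
  moreover have "C (insert u (\<Union>w\<in>?B. creach d r w)) \<le> C (creach d r u)"
    by (rule emeasure_mono[OF sub]) simp
  ultimately show ?thesis by simp
qed

lemma upper_pointwise:
  assumes u: "u \<in> tree_vert d"
  shows "C (creach d r u \<inter> D) \<le> 1 + (\<Sum>x\<in>ballS d u (r u). C (creach d r x \<inter> D))"
proof -
  have "creach d r u \<inter> D \<subseteq> {u} \<union> (\<Union>x\<in>ballS d u (r u). creach d r x \<inter> D)"
    using creach_upper[of d r u] cone_ball_minus[of d r u] by auto
  then have "C (creach d r u \<inter> D) \<le> C ({u} \<union> (\<Union>x\<in>ballS d u (r u). creach d r x \<inter> D))"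
    by (rule emeasure_mono) simp
  also have "\<dots> \<le> C {u} + C (\<Union>x\<in>ballS d u (r u). creach d r x \<inter> D)"
    by (rule emeasure_subadditive) auto
  also have "C (\<Union>x\<in>ballS d u (r u). creach d r x \<inter> D) \<le> (\<Sum>x\<in>ballS d u (r u). C (creach d r x \<inter> D))"
    by (rule emeasure_subadditive_finite) (auto simp: finite_ballS)
  finally show ?thesis by (simp add: add_left_mono)
qed

abbreviation CS :: "nat measure" where "CS \<equiv> count_space UNIV"

lemma meas_fin:
  fixes h :: "(nat list \<Rightarrow> nat) \<Rightarrow> ennreal"
  assumes F: "finite F"
  shows "h \<in> borel_measurable (PiM F (\<lambda>_. CS))"
proof -
  let ?I = "space (PiM F (\<lambda>_. CS))"
  have cI: "countable ?I" unfolding space_PiM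
    by (rule countable_PiE[OF F]) simp
  have g: "(\<lambda>x. x) \<in> measurable (PiM F (\<lambda>_. CS)) (count_space ?I)"
    unfolding measurable_count_space_eq_countable[OF cI]
  proof safe
    fix a assume a: "a \<in> ?I"
    have "(\<lambda>x. x) -` {a} \<inter> ?I = (\<Pi>\<^sub>E i\<in>F. {a i})"
      using a by (auto simp: space_PiM PiE_iff extensional_def fun_eq_iff) metis
    also have "\<dots> \<in> sets (PiM F (\<lambda>_. CS))"
      by (rule sets_PiM_I_finite[OF F]) simp
    finally show "(\<lambda>x. x) -` {a} \<inter> ?I \<in> sets (PiM F (\<lambda>_. CS))" .
  qed
  have "(\<lambda>x. (\<lambda>i x. h i) x x) \<in> borel_measurable (PiM F (\<lambda>_. CS))"
    by (rule measurable_compose_countable'[OF _ g cI]) simp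
  then show ?thesis by simp
qed

definition DN :: "nat \<Rightarrow> nat list set" where "DN N = {v. length v \<le> N}"

lemma creach_trunc_restrict:
  assumes x: "x \<in> tree_vert d" and S: "{v \<in> tree_vert d. anc_le x v} \<subseteq> S"
  shows "creach d (restrict f (S \<inter> DN N)) x \<inter> DN N = creach d f x \<inter> DN N"
proof -
  have "v \<in> creach d g x \<Longrightarrow> v \<in> DN N \<Longrightarrow> v \<in> creach d g' x"
    if "\<And>y. y \<in> S \<inter> DN N \<Longrightarrow> g y = g' y" for g g' v
  proof -
    assume v: "v \<in> creach d g x" "v \<in> DN N"
    show ?thesis
    proof (rule creach_local[OF x v(1)])
      fix y assume "y \<in> tree_vert d" "anc_le x y" "anc_le y v"
      then have "y \<in> S \<inter> DN N" using S v(2) anc_le_length[of y v] by (auto simp: DN_def)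
      then show "g y = g' y" by (rule that)
    qed
  qed
  note L = this
  have A: "v \<in> creach d (restrict f (S \<inter> DN N)) x \<Longrightarrow> v \<in> DN N \<Longrightarrow> v \<in> creach d f x" for v
    by (rule L[of "restrict f (S \<inter> DN N)" f]) auto
  have B: "v \<in> creach d f x \<Longrightarrow> v \<in> DN N \<Longrightarrow> v \<in> creach d (restrict f (S \<inter> DN N)) x" for v
    by (rule L[of f "restrict f (S \<inter> DN N)"]) auto
  show ?thesis using A B by blast
qed

lemma creach_restrict:
  assumes x: "x \<in> tree_vert d" and S: "{v \<in> tree_vert d. anc_le x v} \<subseteq> S"
  shows "creach d (restrict f S) x = creach d f x"
proof -
  have "v \<in> creach d g x \<Longrightarrow> v \<in> creach d g' x"
    if "\<And>y. y \<in> S \<Longrightarrow> g y = g' y" for g g' v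
  proof -
    assume v: "v \<in> creach d g x"
    show ?thesis
    proof (rule creach_local[OF x v(1)])
      fix y assume "y \<in> tree_vert d" "anc_le x y" "anc_le y v"
      then have "y \<in> S" using S by auto
      then show "g y = g' y" by (rule that)
    qed
  qed
  note L = this
  have A: "v \<in> creach d (restrict f S) x \<Longrightarrow> v \<in> creach d f x" for v
    by (rule L[of "restrict f S" f]) auto
  have B: "v \<in> creach d f x \<Longrightarrow> v \<in> creach d (restrict f S) x" for v
    by (rule L[of f "restrict f S"]) auto
  show ?thesis using A B by blast
qed

lemma G_meas_N:
  assumes x: "x \<in> tree_vert d" and S: "{v \<in> tree_vert d. anc_le x v} \<subseteq> S" "S \<subseteq> tree_vert d"
  shows "(\<lambda>f. C (creach d f x \<inter> DN N)) \<in> borel_measurable (PiM S (\<lambda>_. CS))"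
proof -
  have fin: "finite (S \<inter> DN N)"
    by (rule finite_subset[OF _ finite_tree_le[of d N]]) (use S in \<open>auto simp: DN_def\<close>)
  have eq: "(\<lambda>f. C (creach d f x \<inter> DN N)) = (\<lambda>f. (\<lambda>g. C (creach d g x \<inter> DN N)) (restrict f (S \<inter> DN N)))"
    using creach_trunc_restrict[OF x S(1)] by simp
  show ?thesis unfolding eq
    by (rule measurable_compose[OF measurable_restrict_subset meas_fin[OF fin]]) simp
qed

lemma C_SUP: "C A = (SUP N. C (A \<inter> DN N))"
proof -
  have "(SUP N. C (A \<inter> DN N)) = C (\<Union>N. A \<inter> DN N)"
    by (rule SUP_emeasure_incseq) (auto simp: incseq_def DN_def)
  also have "(\<Union>N. A \<inter> DN N) = A" by (auto simp: DN_def)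
  finally show ?thesis by simp
qed

lemma G_meas:
  assumes x: "x \<in> tree_vert d" and S: "{v \<in> tree_vert d. anc_le x v} \<subseteq> S" "S \<subseteq> tree_vert d"
  shows "(\<lambda>f. C (creach d f x)) \<in> borel_measurable (PiM S (\<lambda>_. CS))"
proof -
  have "(\<lambda>f. SUP N. C (creach d f x \<inter> DN N)) \<in> borel_measurable (PiM S (\<lambda>_. CS))"
    by (rule borel_measurable_SUP) (auto intro: G_meas_N[OF x S])
  then show ?thesis by (subst C_SUP) 
qed

locale cone_setup = prob_space M for M :: "'a measure" +
  fixes d :: nat and R :: "nat list \<Rightarrow> 'a \<Rightarrow> nat"
  assumes ind: "indep_vars (\<lambda>_. CS) R (tree_vert d)"
    and deq: "\<forall>v\<in>tree_vert d. distr M CS (R v) = distr M CS (R [])"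
begin

definition Sub :: "nat list \<Rightarrow> nat list set" where
  "Sub u = {v \<in> tree_vert d. anc_le u v \<and> v \<noteq> u}"

definition V :: "nat list \<Rightarrow> 'a \<Rightarrow> nat list \<Rightarrow> nat" where
  "V u \<omega> = restrict (\<lambda>i. R i \<omega>) (Sub u)"

definition X :: "nat list \<Rightarrow> 'a \<Rightarrow> ennreal" where
  "X x \<omega> = C (creach d (\<lambda>v. R v \<omega>) x)"

definition XN :: "nat \<Rightarrow> nat list \<Rightarrow> 'a \<Rightarrow> ennreal" where
  "XN N x \<omega> = C (creach d (\<lambda>v. R v \<omega>) x \<inter> DN N)"

lemma R_meas: "v \<in> tree_vert d \<Longrightarrow> R v \<in> measurable M CS"
  using ind unfolding indep_vars_def by auto

lemma root_T[simp]: "[] \<in> tree_vert d" by (simp add: tree_vert_def)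

lemma X_meas: assumes x: "x \<in> tree_vert d" shows "X x \<in> borel_measurable M"
proof -
  let ?S = "{v \<in> tree_vert d. anc_le x v}"
  have "(\<lambda>\<omega>. (\<lambda>f. C (creach d f x)) (restrict (\<lambda>i. R i \<omega>) ?S)) \<in> borel_measurable M"
    by (rule measurable_compose[OF measurable_restrict G_meas[OF x]]) (auto intro: R_meas)
  moreover have "(\<lambda>f. C (creach d f x)) (restrict (\<lambda>i. R i \<omega>) ?S) = X x \<omega>" for \<omega>
    unfolding X_def by (subst creach_restrict[OF x]) auto
  ultimately show ?thesis by simp
qed

lemma XN_meas: assumes x: "x \<in> tree_vert d" shows "XN N x \<in> borel_measurable M"
proof -
  let ?S = "{v \<in> tree_vert d. anc_le x v}"
  have "(\<lambda>\<omega>. (\<lambda>f. C (creach d f x \<inter> DN N)) (restrict (\<lambda>i. R i \<omega>) ?S)) \<in> borel_measurable M"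
    by (rule measurable_compose[OF measurable_restrict G_meas_N[OF x]]) (auto intro: R_meas)
  moreover have "(\<lambda>f. C (creach d f x \<inter> DN N)) (restrict (\<lambda>i. R i \<omega>) ?S) = XN N x \<omega>" for \<omega>
    unfolding XN_def by (subst creach_restrict[OF x]) auto
  ultimately show ?thesis by simp
qed

lemma Sub_sub: "x \<in> Sub u \<Longrightarrow> {v \<in> tree_vert d. anc_le x v} \<subseteq> Sub u"
  unfolding Sub_def using anc_le_trans anc_le_length anc_le_eq_len
  by (smt (verit, ccfv_SIG) le_antisym mem_Collect_eq subsetI)

lemma Sub_T: "Sub u \<subseteq> tree_vert d" by (auto simp: Sub_def)

lemma X_V: "x \<in> Sub u \<Longrightarrow> X x \<omega> = C (creach d (V u \<omega>) x)"
  unfolding X_def V_def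
  by (subst creach_restrict[OF _ Sub_sub]) (auto simp: Sub_def)

lemma XN_V: "x \<in> Sub u \<Longrightarrow> XN N x \<omega> = C (creach d (V u \<omega>) x \<inter> DN N)"
  unfolding XN_def V_def
  by (subst creach_restrict[OF _ Sub_sub]) (auto simp: Sub_def)

lemma GX_meas: "x \<in> Sub u \<Longrightarrow> (\<lambda>f. C (creach d f x)) \<in> borel_measurable (PiM (Sub u) (\<lambda>_. CS))"
  by (rule G_meas[OF _ Sub_sub Sub_T]) (auto simp: Sub_def)

lemma GXN_meas: "x \<in> Sub u \<Longrightarrow> (\<lambda>f. C (creach d f x \<inter> DN N)) \<in> borel_measurable (PiM (Sub u) (\<lambda>_. CS))"
  by (rule G_meas_N[OF _ Sub_sub Sub_T]) (auto simp: Sub_def)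

lemma V_meas: "V u \<in> measurable M (PiM (Sub u) (\<lambda>_. CS))"
  unfolding V_def[abs_def] by (rule measurable_restrict) (use Sub_T R_meas in auto)

lemma indep_prod:
  fixes \<phi> :: "nat \<Rightarrow> ennreal"
  assumes u: "u \<in> tree_vert d" and G: "G \<in> borel_measurable (PiM (Sub u) (\<lambda>_. CS))"
  shows "(\<integral>\<^sup>+\<omega>. \<phi> (R u \<omega>) * G (V u \<omega>) \<partial>M) = (\<integral>\<^sup>+\<omega>. \<phi> (R u \<omega>) \<partial>M) * (\<integral>\<^sup>+\<omega>. G (V u \<omega>) \<partial>M)"
proof -
  have iv: "indep_var (PiM {u} (\<lambda>_. CS)) (\<lambda>\<omega>. restrict (\<lambda>i. R i \<omega>) {u}) (PiM (Sub u) (\<lambda>_. CS)) (V u)"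
    unfolding V_def[abs_def] by (rule indep_var_restrict[OF ind]) (use u Sub_T in \<open>auto simp: Sub_def\<close>)
  have m1: "(\<lambda>f. \<phi> (f u)) \<in> borel_measurable (PiM {u} (\<lambda>_. CS))"
    by (rule measurable_compose[OF measurable_component_singleton]) auto
  have iv2: "indep_var borel ((\<lambda>f. \<phi> (f u)) \<circ> (\<lambda>\<omega>. restrict (\<lambda>i. R i \<omega>) {u})) borel (G \<circ> V u)"
    by (rule indep_var_compose[OF iv m1 G])
  have e: "((\<lambda>f. \<phi> (f u)) \<circ> (\<lambda>\<omega>. restrict (\<lambda>i. R i \<omega>) {u})) = (\<lambda>\<omega>. \<phi> (R u \<omega>))"
    by (auto simp: fun_eq_iff)
  have iv3: "indep_vars (\<lambda>_. borel) (case_bool (\<lambda>\<omega>. \<phi> (R u \<omega>)) (G \<circ> V u)) UNIV"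
  proof -
    have "case_bool (borel :: ennreal measure) borel = (\<lambda>_. borel)" by (auto simp: fun_eq_iff split: bool.split)
    then show ?thesis using iv2 unfolding e indep_var_def by simp
  qed
  have "(\<integral>\<^sup>+\<omega>. (\<Prod>i\<in>UNIV. case_bool (\<lambda>\<omega>. \<phi> (R u \<omega>)) (G \<circ> V u) i \<omega>) \<partial>M)
     = (\<Prod>i\<in>UNIV. \<integral>\<^sup>+\<omega>. case_bool (\<lambda>\<omega>. \<phi> (R u \<omega>)) (G \<circ> V u) i \<omega> \<partial>M)"
    by (rule indep_vars_nn_integral[OF _ iv3]) auto
  then show ?thesis by (simp add: UNIV_bool mult.commute comp_def)
qed

end

context cone_setup begin

definition ind :: "nat \<Rightarrow> nat \<Rightarrow> ennreal" where "ind k n = (if k = n then 1 else 0)"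

lemma ind_meas: "u \<in> tree_vert d \<Longrightarrow> (\<lambda>\<omega>. ind k (R u \<omega>)) \<in> borel_measurable M"
  by (rule measurable_compose[OF R_meas]) auto

lemma split_sum:
  assumes u: "u \<in> tree_vert d" and Z: "\<And>k. Z k \<in> borel_measurable M"
  shows "(\<integral>\<^sup>+\<omega>. Z (R u \<omega>) \<omega> \<partial>M) = (\<Sum>k. \<integral>\<^sup>+\<omega>. ind k (R u \<omega>) * Z k \<omega> \<partial>M)"
proof -
  have pw: "Z (R u \<omega>) \<omega> = (\<Sum>k. ind k (R u \<omega>) * Z k \<omega>)" for \<omega>
  proof -
    have "(\<lambda>k. if k = R u \<omega> then Z k \<omega> else 0) sums Z (R u \<omega>) \<omega>" by (rule sums_single)
    moreover have "(\<lambda>k. if k = R u \<omega> then Z k \<omega> else 0) = (\<lambda>k. ind k (R u \<omega>) * Z k \<omega>)"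
      by (auto simp: ind_def fun_eq_iff)
    ultimately show ?thesis by (simp add: sums_unique)
  qed
  show ?thesis unfolding pw
    by (rule nn_integral_suminf) (rule borel_measurable_times_ennreal[OF ind_meas[OF u] Z])
qed

lemma exp_sum:
  assumes u: "u \<in> tree_vert d" and F: "\<And>k. F k \<subseteq> Sub u" "\<And>k. finite (F k)"
    and G: "\<And>x. x \<in> Sub u \<Longrightarrow> Gs x \<in> borel_measurable (PiM (Sub u) (\<lambda>_. CS))"
  shows "(\<integral>\<^sup>+\<omega>. (\<Sum>x\<in>F (R u \<omega>). Gs x (V u \<omega>)) \<partial>M)
       = (\<integral>\<^sup>+\<omega>. (\<Sum>x\<in>F (R u \<omega>). \<integral>\<^sup>+\<omega>'. Gs x (V u \<omega>') \<partial>M) \<partial>M)"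
proof -
  have GV: "x \<in> Sub u \<Longrightarrow> (\<lambda>\<omega>. Gs x (V u \<omega>)) \<in> borel_measurable M" for x
    by (rule measurable_compose[OF V_meas G])
  have m1: "(\<lambda>\<omega>. \<Sum>x\<in>F k. Gs x (V u \<omega>)) \<in> borel_measurable M" for k
    using F GV by (intro borel_measurable_sum) auto
  have eqk: "(\<integral>\<^sup>+\<omega>. ind k (R u \<omega>) * (\<Sum>x\<in>F k. Gs x (V u \<omega>)) \<partial>M)
     = (\<integral>\<^sup>+\<omega>. ind k (R u \<omega>) * (\<Sum>x\<in>F k. \<integral>\<^sup>+\<omega>'. Gs x (V u \<omega>') \<partial>M) \<partial>M)" for k
  proof -
    have "(\<integral>\<^sup>+\<omega>. ind k (R u \<omega>) * (\<Sum>x\<in>F k. Gs x (V u \<omega>)) \<partial>M)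
        = (\<integral>\<^sup>+\<omega>. (\<Sum>x\<in>F k. ind k (R u \<omega>) * Gs x (V u \<omega>)) \<partial>M)"
      by (simp add: sum_distrib_left)
    also have "\<dots> = (\<Sum>x\<in>F k. \<integral>\<^sup>+\<omega>. ind k (R u \<omega>) * Gs x (V u \<omega>) \<partial>M)"
      by (rule nn_integral_sum) (use F in \<open>auto intro!: borel_measurable_times_ennreal ind_meas[OF u] GV\<close>)
    also have "\<dots> = (\<Sum>x\<in>F k. (\<integral>\<^sup>+\<omega>. ind k (R u \<omega>) \<partial>M) * (\<integral>\<^sup>+\<omega>'. Gs x (V u \<omega>') \<partial>M))"
      by (rule sum.cong[OF refl], rule indep_prod[OF u G]) (use F in auto)
    also have "\<dots> = (\<Sum>x\<in>F k. \<integral>\<^sup>+\<omega>. ind k (R u \<omega>) * (\<integral>\<^sup>+\<omega>'. Gs x (V u \<omega>') \<partial>M) \<partial>M)"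
      by (rule sum.cong[OF refl], rule nn_integral_multc[symmetric, OF ind_meas[OF u]])
    also have "\<dots> = (\<integral>\<^sup>+\<omega>. (\<Sum>x\<in>F k. ind k (R u \<omega>) * (\<integral>\<^sup>+\<omega>'. Gs x (V u \<omega>') \<partial>M)) \<partial>M)"
      by (rule nn_integral_sum[symmetric]) (auto intro!: borel_measurable_times_ennreal ind_meas[OF u])
    also have "\<dots> = (\<integral>\<^sup>+\<omega>. ind k (R u \<omega>) * (\<Sum>x\<in>F k. \<integral>\<^sup>+\<omega>'. Gs x (V u \<omega>') \<partial>M) \<partial>M)"
      by (simp add: sum_distrib_left)
    finally show ?thesis .
  qed
  have "(\<integral>\<^sup>+\<omega>. (\<Sum>x\<in>F (R u \<omega>). Gs x (V u \<omega>)) \<partial>M)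
       = (\<Sum>k. \<integral>\<^sup>+\<omega>. ind k (R u \<omega>) * (\<Sum>x\<in>F k. Gs x (V u \<omega>)) \<partial>M)"
    by (rule split_sum[OF u m1])
  also have "\<dots> = (\<Sum>k. \<integral>\<^sup>+\<omega>. ind k (R u \<omega>) * (\<Sum>x\<in>F k. \<integral>\<^sup>+\<omega>'. Gs x (V u \<omega>') \<partial>M) \<partial>M)"
    by (rule suminf_cong, rule eqk)
  also have "\<dots> = (\<integral>\<^sup>+\<omega>. (\<Sum>x\<in>F (R u \<omega>). \<integral>\<^sup>+\<omega>'. Gs x (V u \<omega>') \<partial>M) \<partial>M)"
    by (rule split_sum[OF u, symmetric]) (rule borel_measurable_const)
  finally show ?thesis .
qed

lemma exp_distr:
  assumes v: "v \<in> tree_vert d"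
  shows "(\<integral>\<^sup>+\<omega>. h (R v \<omega>) \<partial>M) = (\<integral>\<^sup>+\<omega>. h (R [] \<omega>) \<partial>M)"
proof -
  have "(\<integral>\<^sup>+\<omega>. h (R v \<omega>) \<partial>M) = (\<integral>\<^sup>+n. h n \<partial>distr M CS (R v))"
    by (rule nn_integral_distr[symmetric, OF R_meas[OF v]]) simp
  also have "\<dots> = (\<integral>\<^sup>+n. h n \<partial>distr M CS (R []))" by (subst deq[rule_format, OF v]) (rule refl)
  also have "\<dots> = (\<integral>\<^sup>+\<omega>. h (R [] \<omega>) \<partial>M)"
    by (rule nn_integral_distr[OF R_meas]) simp_all
  finally show ?thesis .
qed

end

definition cb :: "nat \<Rightarrow> nat \<Rightarrow> nat" where "cb d k = (if k = 0 then 0 else d ^ k)"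
definition cbr :: "nat \<Rightarrow> nat \<Rightarrow> nat" where "cbr d k = (if k = 0 then 0 else (d + 1) * d ^ (k - 1))"
definition cB :: "nat \<Rightarrow> nat \<Rightarrow> nat" where "cB d k = (\<Sum>j\<in>{1..k}. d ^ j)"
definition cBr :: "nat \<Rightarrow> nat \<Rightarrow> nat" where "cBr d k = (\<Sum>j\<in>{1..k}. (d + 1) * d ^ (j - 1))"

lemma card_bdS_nonroot: "u \<in> tree_vert d \<Longrightarrow> u \<noteq> [] \<Longrightarrow> card (bdS d u k) = cb d k"
  by (simp add: bdS_def cb_def card_lev_nonroot)

lemma card_bdS_root: "card (bdS d [] k) = cbr d k"
  by (cases k) (simp_all add: bdS_def cbr_def card_lev_root)

lemma card_ballS_nonroot: "u \<in> tree_vert d \<Longrightarrow> u \<noteq> [] \<Longrightarrow> card (ballS d u k) = cB d k"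
  by (simp add: card_ballS cB_def card_lev_nonroot)

lemma card_ballS_root: "card (ballS d [] k) = cBr d k"
  unfolding card_ballS cBr_def
proof (rule sum.cong[OF refl])
  fix j assume "j \<in> {1..k}"
  then obtain i where "j = Suc i" by (cases j) auto
  then show "card (lev d [] j) = (d + 1) * d ^ (j - 1)" by (simp add: card_lev_root)
qed

lemma cB_closed: "d \<ge> 1 \<Longrightarrow> (d - 1) * cB d k + d = d * d ^ k"
proof (induction k)
  case 0 then show ?case by (simp add: cB_def)
next
  case (Suc k)
  have "cB d (Suc k) = cB d k + d ^ Suc k" by (simp add: cB_def)
  then have "(d - 1) * cB d (Suc k) + d = ((d - 1) * cB d k + d) + (d - 1) * d ^ Suc k"
    by (simp add: algebra_simps)
  also have "\<dots> = d * d ^ k + (d - 1) * d ^ Suc k" using Suc by simp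
  also have "\<dots> = d * d ^ Suc k" using Suc.prems
    by (cases d) (auto simp: algebra_simps)
  finally show ?case .
qed

lemma cBr_cB: "d * cBr d k = (d + 1) * cB d k"
proof (induction k)
  case 0 then show ?case by (simp add: cB_def cBr_def)
next
  case (Suc k)
  have "cBr d (Suc k) = cBr d k + (d + 1) * d ^ k" "cB d (Suc k) = cB d k + d ^ Suc k"
    by (simp_all add: cB_def cBr_def)
  then show ?case using Suc by (simp add: algebra_simps)
qed

lemma cbr_cb: "d * cbr d k = (d + 1) * cb d k"
  by (cases k) (simp_all add: cb_def cbr_def algebra_simps)

lemma ennreal_minus_eq:
  assumes "x + ennreal a = ennreal c" "0 \<le> a" "a \<le> c"
  shows "x = ennreal (c - a)"
proof -
  have "x \<noteq> \<top>" proof assume "x = \<top>" then show False using assms(1) by simp qed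
  then obtain y where y: "x = ennreal y" "0 \<le> y" by (cases x) auto
  then have "ennreal (y + a) = ennreal c" using assms by (simp add: ennreal_plus)
  then have "y + a = c" using y assms by (metis ennreal_inj add_nonneg_nonneg order_trans)
  then show ?thesis using y by simp
qed

context cone_setup begin

lemma sum_meas:
  assumes u: "u \<in> tree_vert d" and f: "\<And>k. (\<lambda>\<omega>. f k \<omega>) \<in> borel_measurable M"
  shows "(\<lambda>\<omega>. f (R u \<omega>) \<omega>) \<in> borel_measurable M"
  by (rule measurable_compose_countable[OF f R_meas[OF u]])

lemma bdS_Sub: "bdS d u k \<subseteq> Sub u"
  by (auto simp: bdS_def lev_def Sub_def split: if_splits)

lemma ballS_Sub: "ballS d u k \<subseteq> Sub u"
  by (auto simp: ballS_def Sub_def)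

lemma finite_bdS: "finite (bdS d u k)"
  by (simp add: bdS_def finite_lev)

lemma low_step:
  assumes u: "u \<in> tree_vert d"
  shows "1 + (\<integral>\<^sup>+\<omega>. (\<Sum>w\<in>bdS d u (R u \<omega>). \<integral>\<^sup>+\<omega>'. X w \<omega>' \<partial>M) \<partial>M) \<le> (\<integral>\<^sup>+\<omega>. X u \<omega> \<partial>M)"
proof -
  have mS: "(\<lambda>\<omega>. \<Sum>w\<in>bdS d u (R u \<omega>). X w \<omega>) \<in> borel_measurable M"
    by (rule sum_meas[OF u], rule borel_measurable_sum, rule X_meas)
       (use bdS_Sub Sub_T in blast)
  have "(\<integral>\<^sup>+\<omega>. (\<Sum>w\<in>bdS d u (R u \<omega>). X w \<omega>) \<partial>M)
      = (\<integral>\<^sup>+\<omega>. (\<Sum>w\<in>bdS d u (R u \<omega>). (\<lambda>f. C (creach d f w)) (V u \<omega>)) \<partial>M)"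
    by (rule nn_integral_cong, rule sum.cong[OF refl], rule X_V) (use bdS_Sub in blast)
  also have "\<dots> = (\<integral>\<^sup>+\<omega>. (\<Sum>w\<in>bdS d u (R u \<omega>). \<integral>\<^sup>+\<omega>'. (\<lambda>f. C (creach d f w)) (V u \<omega>') \<partial>M) \<partial>M)"
    by (rule exp_sum[OF u bdS_Sub finite_bdS GX_meas])
  also have "\<dots> = (\<integral>\<^sup>+\<omega>. (\<Sum>w\<in>bdS d u (R u \<omega>). \<integral>\<^sup>+\<omega>'. X w \<omega>' \<partial>M) \<partial>M)"
    by (rule nn_integral_cong, rule sum.cong[OF refl], rule nn_integral_cong, rule X_V[symmetric])
       (use bdS_Sub in blast)
  finally have eq: "(\<integral>\<^sup>+\<omega>. (\<Sum>w\<in>bdS d u (R u \<omega>). X w \<omega>) \<partial>M) = (\<integral>\<^sup>+\<omega>. (\<Sum>w\<in>bdS d u (R u \<omega>). \<integral>\<^sup>+\<omega>'. X w \<omega>' \<partial>M) \<partial>M)" .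
  have "(\<integral>\<^sup>+\<omega>. 1 + (\<Sum>w\<in>bdS d u (R u \<omega>). X w \<omega>) \<partial>M) \<le> (\<integral>\<^sup>+\<omega>. X u \<omega> \<partial>M)"
    by (rule nn_integral_mono) (unfold X_def, rule lower_pointwise[OF u])
  moreover have "(\<integral>\<^sup>+\<omega>. 1 + (\<Sum>w\<in>bdS d u (R u \<omega>). X w \<omega>) \<partial>M) = 1 + (\<integral>\<^sup>+\<omega>. (\<Sum>w\<in>bdS d u (R u \<omega>). X w \<omega>) \<partial>M)"
    by (subst nn_integral_add) (use mS in \<open>auto simp: emeasure_space_1\<close>)
  ultimately show ?thesis using eq by simp
qed

lemma upp_step:
  assumes u: "u \<in> tree_vert d"
  shows "(\<integral>\<^sup>+\<omega>. XN N u \<omega> \<partial>M) \<le> 1 + (\<integral>\<^sup>+\<omega>. (\<Sum>x\<in>ballS d u (R u \<omega>). \<integral>\<^sup>+\<omega>'. XN N x \<omega>' \<partial>M) \<partial>M)"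
proof -
  have mS: "(\<lambda>\<omega>. \<Sum>x\<in>ballS d u (R u \<omega>). XN N x \<omega>) \<in> borel_measurable M"
    by (rule sum_meas[OF u], rule borel_measurable_sum, rule XN_meas)
       (use ballS_Sub Sub_T in blast)
  have "(\<integral>\<^sup>+\<omega>. (\<Sum>x\<in>ballS d u (R u \<omega>). XN N x \<omega>) \<partial>M)
      = (\<integral>\<^sup>+\<omega>. (\<Sum>x\<in>ballS d u (R u \<omega>). (\<lambda>f. C (creach d f x \<inter> DN N)) (V u \<omega>)) \<partial>M)"
    by (rule nn_integral_cong, rule sum.cong[OF refl], rule XN_V) (use ballS_Sub in blast)
  also have "\<dots> = (\<integral>\<^sup>+\<omega>. (\<Sum>x\<in>ballS d u (R u \<omega>). \<integral>\<^sup>+\<omega>'. (\<lambda>f. C (creach d f x \<inter> DN N)) (V u \<omega>') \<partial>M) \<partial>M)"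
    by (rule exp_sum[OF u ballS_Sub finite_ballS GXN_meas])
  also have "\<dots> = (\<integral>\<^sup>+\<omega>. (\<Sum>x\<in>ballS d u (R u \<omega>). \<integral>\<^sup>+\<omega>'. XN N x \<omega>' \<partial>M) \<partial>M)"
    by (rule nn_integral_cong, rule sum.cong[OF refl], rule nn_integral_cong, rule XN_V[symmetric])
       (use ballS_Sub in blast)
  finally have eq: "(\<integral>\<^sup>+\<omega>. (\<Sum>x\<in>ballS d u (R u \<omega>). XN N x \<omega>) \<partial>M) = (\<integral>\<^sup>+\<omega>. (\<Sum>x\<in>ballS d u (R u \<omega>). \<integral>\<^sup>+\<omega>'. XN N x \<omega>' \<partial>M) \<partial>M)" .
  have "(\<integral>\<^sup>+\<omega>. XN N u \<omega> \<partial>M) \<le> (\<integral>\<^sup>+\<omega>. 1 + (\<Sum>x\<in>ballS d u (R u \<omega>). XN N x \<omega>) \<partial>M)"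
    by (rule nn_integral_mono) (unfold XN_def, rule upper_pointwise[OF u])
  moreover have "(\<integral>\<^sup>+\<omega>. 1 + (\<Sum>x\<in>ballS d u (R u \<omega>). XN N x \<omega>) \<partial>M) = 1 + (\<integral>\<^sup>+\<omega>. (\<Sum>x\<in>ballS d u (R u \<omega>). XN N x \<omega>) \<partial>M)"
    by (subst nn_integral_add) (use mS in \<open>auto simp: emeasure_space_1\<close>)
  ultimately show ?thesis using eq by simp
qed

lemma X_SUP:
  assumes x: "x \<in> tree_vert d"
  shows "(\<integral>\<^sup>+\<omega>. X x \<omega> \<partial>M) = (SUP N. \<integral>\<^sup>+\<omega>. XN N x \<omega> \<partial>M)"
proof -
  have "X x \<omega> = (SUP N. XN N x \<omega>)" for \<omega>
    unfolding X_def XN_def by (rule C_SUP)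
  then have "(\<integral>\<^sup>+\<omega>. X x \<omega> \<partial>M) = (\<integral>\<^sup>+\<omega>. (SUP N. XN N x \<omega>) \<partial>M)" by simp
  also have "\<dots> = (SUP N. \<integral>\<^sup>+\<omega>. XN N x \<omega> \<partial>M)"
  proof (rule nn_integral_monotone_convergence_SUP)
    show "incseq (\<lambda>N \<omega>. XN N x \<omega>)"
      unfolding incseq_def le_fun_def XN_def
      by (auto intro!: emeasure_mono simp: DN_def)
    show "\<And>N. (\<lambda>\<omega>. XN N x \<omega>) \<in> borel_measurable M" by (rule XN_meas[OF x])
  qed
  finally show ?thesis .
qed

lemma XN_bound:
  assumes x: "x \<in> tree_vert d"
  shows "(\<integral>\<^sup>+\<omega>. XN N x \<omega> \<partial>M) \<le> of_nat (card {v \<in> tree_vert d. length v \<le> N})"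
proof -
  have "(\<integral>\<^sup>+\<omega>. XN N x \<omega> \<partial>M) \<le> (\<integral>\<^sup>+\<omega>. of_nat (card {v \<in> tree_vert d. length v \<le> N}) \<partial>M)"
  proof (rule nn_integral_mono)
    fix \<omega>
    have "creach d (\<lambda>v. R v \<omega>) x \<inter> DN N \<subseteq> {v \<in> tree_vert d. length v \<le> N}"
      using creach_sub[OF x] by (auto simp: DN_def)
    then have "XN N x \<omega> \<le> C {v \<in> tree_vert d. length v \<le> N}"
      unfolding XN_def by (rule emeasure_mono) simp
    also have "\<dots> = of_nat (card {v \<in> tree_vert d. length v \<le> N})"
      using finite_tree_le by simp
    finally show "XN N x \<omega> \<le> of_nat (card {v \<in> tree_vert d. length v \<le> N})" .
  qed
  also have "\<dots> = of_nat (card {v \<in> tree_vert d. length v \<le> N})"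
    by (simp add: emeasure_space_1)
  finally show ?thesis .
qed

end

lemma fix_low:
  fixes m :: ennreal
  assumes "1 + ennreal a * m \<le> m" "0 \<le> a" "a < 1"
  shows "ennreal (1 / (1 - a)) \<le> m"
proof (cases "m = \<top>")
  case True then show ?thesis by simp
next
  case False
  then obtain y where y: "m = ennreal y" "0 \<le> y" by (cases m) auto
  then have "ennreal (1 + a * y) \<le> ennreal y" using assms
    by (simp add: ennreal_plus ennreal_mult)
  then have "1 + a * y \<le> y" using y by (simp add: ennreal_le_iff)
  then have "1 / (1 - a) \<le> y" using assms by (simp add: field_simps)
  then show ?thesis using y by simp
qed

lemma fix_up:
  fixes m :: ennreal
  assumes "m \<le> 1 + ennreal b * m" "m < \<top>" "0 \<le> b" "b < 1"
  shows "m \<le> ennreal (1 / (1 - b))"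
proof -
  obtain y where y: "m = ennreal y" "0 \<le> y" using assms(2) by (cases m) auto
  then have "ennreal y \<le> ennreal (1 + b * y)" using assms
    by (simp add: ennreal_plus ennreal_mult)
  then have "y \<le> 1 + b * y" using y assms by (subst (asm) ennreal_le_iff) auto
  then have "y \<le> 1 / (1 - b)" using assms by (simp add: field_simps)
  then show ?thesis using y(1) by (simp add: ennreal_leI)
qed

context cone_setup begin

lemma bdS_Sub0: "bdS d u k \<subseteq> Sub []"
  by (auto simp: bdS_def lev_def Sub_def anc_le_def split: if_splits)

lemma ballS_Sub0: "ballS d u k \<subseteq> Sub []"
  by (auto simp: ballS_def Sub_def anc_le_def)

lemma nat_fun_meas: "u \<in> tree_vert d \<Longrightarrow> (\<lambda>\<omega>. (h (R u \<omega>) :: ennreal)) \<in> borel_measurable M"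
  by (rule measurable_compose[OF R_meas]) auto

lemma E_ge1:
  assumes d1: "1 \<le> d"
  shows "1 \<le> (\<integral>\<^sup>+\<omega>. ennreal (real d ^ R [] \<omega>) \<partial>M)"
proof -
  have "(\<integral>\<^sup>+\<omega>. 1 \<partial>M) \<le> (\<integral>\<^sup>+\<omega>. ennreal (real d ^ R [] \<omega>) \<partial>M)"
    by (rule nn_integral_mono) (use d1 in \<open>simp add: one_le_power\<close>)
  then show ?thesis by (simp add: emeasure_space_1)
qed

lemma int_cb:
  assumes d1: "1 \<le> d" and E: "(\<integral>\<^sup>+\<omega>. ennreal (real d ^ R [] \<omega>) \<partial>M) = ennreal e" and e1: "1 \<le> e"
  shows "(\<integral>\<^sup>+\<omega>. of_nat (cb d (R [] \<omega>)) \<partial>M) = ennreal (e - measure M {\<omega>\<in>space M. R [] \<omega> = 0})"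
proof -
  let ?A = "{\<omega>\<in>space M. R [] \<omega> = 0}"
  have A: "?A \<in> sets M"
    using R_meas[OF root_T] by (auto intro: measurable_sets_Collect)
  have pw: "ennreal (real d ^ R [] \<omega>) = of_nat (cb d (R [] \<omega>)) + indicator ?A \<omega>" if "\<omega> \<in> space M" for \<omega>
    using that by (auto simp: cb_def indicator_def of_nat_power[symmetric] ennreal_of_nat_eq_real_of_nat simp del: of_nat_power)
  have "ennreal e = (\<integral>\<^sup>+\<omega>. of_nat (cb d (R [] \<omega>)) + indicator ?A \<omega> \<partial>M)"
    unfolding E[symmetric] by (rule nn_integral_cong) (rule pw)
  also have "\<dots> = (\<integral>\<^sup>+\<omega>. of_nat (cb d (R [] \<omega>)) \<partial>M) + emeasure M ?A"
    by (subst nn_integral_add) (use A in \<open>auto intro: nat_fun_meas\<close>)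
  also have "emeasure M ?A = ennreal (measure M ?A)" by (simp add: emeasure_eq_measure)
  finally have "(\<integral>\<^sup>+\<omega>. of_nat (cb d (R [] \<omega>)) \<partial>M) + ennreal (measure M ?A) = ennreal e" by simp
  then show ?thesis
    by (rule ennreal_minus_eq) (use e1 prob_le_1[of ?A] in \<open>auto intro: order_trans\<close>)
qed

lemma int_cB:
  assumes d2: "2 \<le> d" and E: "(\<integral>\<^sup>+\<omega>. ennreal (real d ^ R [] \<omega>) \<partial>M) = ennreal e" and e1: "1 \<le> e"
  shows "(\<integral>\<^sup>+\<omega>. of_nat (cB d (R [] \<omega>)) \<partial>M) = ennreal (real d * (e - 1) / (real d - 1))"
proof -
  let ?c = "real d / (real d - 1)"
  have c0: "0 \<le> ?c" using d2 by auto
  have pw: "of_nat (cB d k) + ennreal ?c = ennreal ?c * ennreal (real d ^ k)" for k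
  proof -
    have "(d - 1) * cB d k + d = d * d ^ k" using cB_closed[of d k] d2 by simp
    then have "real (d - 1) * real (cB d k) + real d = real d * real d ^ k"
      by (metis of_nat_add of_nat_mult of_nat_power)
    then have "(real d - 1) * real (cB d k) + real d = real d * real d ^ k"
      using d2 by (simp add: of_nat_diff)
    then have "real (cB d k) + ?c = ?c * real d ^ k"
      using d2 by (simp add: field_simps)
    then show ?thesis
      using c0 by (simp add: ennreal_of_nat_eq_real_of_nat ennreal_plus[symmetric] ennreal_mult[symmetric])
  qed
  have "(\<integral>\<^sup>+\<omega>. of_nat (cB d (R [] \<omega>)) \<partial>M) + ennreal ?c = (\<integral>\<^sup>+\<omega>. of_nat (cB d (R [] \<omega>)) + ennreal ?c \<partial>M)"
    by (subst nn_integral_add) (auto intro: nat_fun_meas simp: emeasure_space_1)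
  also have "\<dots> = (\<integral>\<^sup>+\<omega>. ennreal ?c * ennreal (real d ^ R [] \<omega>) \<partial>M)"
    by (simp add: pw)
  also have "\<dots> = ennreal ?c * ennreal e"
    by (subst nn_integral_cmult[OF nat_fun_meas[OF root_T, of "\<lambda>k. ennreal (real d ^ k)"]]) (simp add: E)
  also have "\<dots> = ennreal (?c * e)" using c0 e1 by (simp add: ennreal_mult[symmetric])
  finally have "(\<integral>\<^sup>+\<omega>. of_nat (cB d (R [] \<omega>)) \<partial>M) = ennreal (?c * e - ?c)"
    using mult_left_mono[OF e1 c0] c0 by (intro ennreal_minus_eq) auto
  also have "?c * e - ?c = real d * (e - 1) / (real d - 1)" by (simp add: diff_divide_distrib algebra_simps)
  finally show ?thesis .
qed

lemma int_cbr: "(\<integral>\<^sup>+\<omega>. of_nat (cbr d (R [] \<omega>)) \<partial>M) = ennreal ((real d + 1) / real d) * (\<integral>\<^sup>+\<omega>. of_nat (cb d (R [] \<omega>)) \<partial>M)"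
  if d1: "1 \<le> d"
proof -
  have pw: "(of_nat (cbr d k) :: ennreal) = ennreal ((real d + 1) / real d) * of_nat (cb d k)" for k
  proof -
    have h: "real (d * cbr d k) = real ((d + 1) * cb d k)" by (simp only: cbr_cb)
    then have "real d * real (cbr d k) = (real d + 1) * real (cb d k)" by (simp add: algebra_simps)
    then have "real (cbr d k) = (real d + 1) / real d * real (cb d k)" using d1 by (simp add: field_simps)
    then show ?thesis unfolding ennreal_of_nat_eq_real_of_nat by (subst ennreal_mult[symmetric]) auto
  qed
  have "(\<integral>\<^sup>+\<omega>. of_nat (cbr d (R [] \<omega>)) \<partial>M) = (\<integral>\<^sup>+\<omega>. ennreal ((real d + 1) / real d) * of_nat (cb d (R [] \<omega>)) \<partial>M)"
    by (simp only: pw)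
  also have "\<dots> = ennreal ((real d + 1) / real d) * (\<integral>\<^sup>+\<omega>. of_nat (cb d (R [] \<omega>)) \<partial>M)"
    by (rule nn_integral_cmult[OF nat_fun_meas[OF root_T]])
  finally show ?thesis .
qed

lemma int_cBr: "(\<integral>\<^sup>+\<omega>. of_nat (cBr d (R [] \<omega>)) \<partial>M) = ennreal ((real d + 1) / real d) * (\<integral>\<^sup>+\<omega>. of_nat (cB d (R [] \<omega>)) \<partial>M)"
  if d1: "1 \<le> d"
proof -
  have pw: "(of_nat (cBr d k) :: ennreal) = ennreal ((real d + 1) / real d) * of_nat (cB d k)" for k
  proof -
    have h: "real (d * cBr d k) = real ((d + 1) * cB d k)" by (simp only: cBr_cB)
    then have "real d * real (cBr d k) = (real d + 1) * real (cB d k)" by (simp add: algebra_simps)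
    then have "real (cBr d k) = (real d + 1) / real d * real (cB d k)" using d1 by (simp add: field_simps)
    then show ?thesis unfolding ennreal_of_nat_eq_real_of_nat by (subst ennreal_mult[symmetric]) auto
  qed
  have "(\<integral>\<^sup>+\<omega>. of_nat (cBr d (R [] \<omega>)) \<partial>M) = (\<integral>\<^sup>+\<omega>. ennreal ((real d + 1) / real d) * of_nat (cB d (R [] \<omega>)) \<partial>M)"
    by (simp only: pw)
  also have "\<dots> = ennreal ((real d + 1) / real d) * (\<integral>\<^sup>+\<omega>. of_nat (cB d (R [] \<omega>)) \<partial>M)"
    by (rule nn_integral_cmult[OF nat_fun_meas[OF root_T]])
  finally show ?thesis .
qed

end

context cone_setup begin

lemma Sub0_iff: "u \<in> Sub [] \<longleftrightarrow> u \<in> tree_vert d \<and> u \<noteq> []"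
  by (auto simp: Sub_def anc_le_def)

lemma lower_part:
  assumes d1: "1 \<le> d"
    and E: "(\<integral>\<^sup>+\<omega>. ennreal (real d ^ R [] \<omega>) \<partial>M) = ennreal e" and e1: "1 \<le> e"
  defines "p0 \<equiv> measure M {\<omega>\<in>space M. R [] \<omega> = 0}"
  defines "m \<equiv> (INF x\<in>Sub []. \<integral>\<^sup>+\<omega>. X x \<omega> \<partial>M)"
  shows "1 + ennreal (e - p0) * m \<le> m"
    and "1 + ennreal ((real d + 1) / real d) * ennreal (e - p0) * m \<le> (\<integral>\<^sup>+\<omega>. X [] \<omega> \<partial>M)"
proof -
  have icb: "(\<integral>\<^sup>+\<omega>. of_nat (cb d (R [] \<omega>)) \<partial>M) = ennreal (e - p0)"
    unfolding p0_def by (rule int_cb[OF d1 E e1])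
  have sumlow: "of_nat (card (bdS d u k)) * m \<le> (\<Sum>w\<in>bdS d u k. \<integral>\<^sup>+\<omega>'. X w \<omega>' \<partial>M)" for u k
    by (rule sum_bounded_below) (use bdS_Sub0 in \<open>auto simp: m_def intro!: INF_lower\<close>)
  have gen: "1 + (\<integral>\<^sup>+\<omega>. of_nat (card (bdS d u (R u \<omega>))) * m \<partial>M) \<le> (\<integral>\<^sup>+\<omega>. X u \<omega> \<partial>M)"
    if u: "u \<in> tree_vert d" for u
  proof -
    have "(\<integral>\<^sup>+\<omega>. of_nat (card (bdS d u (R u \<omega>))) * m \<partial>M)
        \<le> (\<integral>\<^sup>+\<omega>. (\<Sum>w\<in>bdS d u (R u \<omega>). \<integral>\<^sup>+\<omega>'. X w \<omega>' \<partial>M) \<partial>M)"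
      by (rule nn_integral_mono) (rule sumlow)
    then show ?thesis using low_step[OF u] by (meson add_left_mono order_trans)
  qed
  have stepL: "1 + ennreal (e - p0) * m \<le> (\<integral>\<^sup>+\<omega>. X u \<omega> \<partial>M)" if u: "u \<in> Sub []" for u
  proof -
    have uT: "u \<in> tree_vert d" "u \<noteq> []" using u by (auto simp: Sub0_iff)
    have "(\<integral>\<^sup>+\<omega>. of_nat (card (bdS d u (R u \<omega>))) * m \<partial>M) = (\<integral>\<^sup>+\<omega>. of_nat (cb d (R u \<omega>)) * m \<partial>M)"
      using card_bdS_nonroot[OF uT] by simp
    also have "\<dots> = (\<integral>\<^sup>+\<omega>. of_nat (cb d (R u \<omega>)) \<partial>M) * m"
      by (rule nn_integral_multc[OF nat_fun_meas[OF uT(1)]])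
    also have "(\<integral>\<^sup>+\<omega>. of_nat (cb d (R u \<omega>)) \<partial>M) = (\<integral>\<^sup>+\<omega>. of_nat (cb d (R [] \<omega>)) \<partial>M)"
      by (rule exp_distr[OF uT(1)])
    finally show ?thesis using gen[OF uT(1)] icb by (simp add: mult.commute)
  qed
  show "1 + ennreal (e - p0) * m \<le> m"
    unfolding m_def[of ] by (rule INF_greatest) (rule stepL[unfolded m_def])
  have "(\<integral>\<^sup>+\<omega>. of_nat (card (bdS d [] (R [] \<omega>))) * m \<partial>M) = (\<integral>\<^sup>+\<omega>. of_nat (cbr d (R [] \<omega>)) * m \<partial>M)"
    using card_bdS_root by simp
  also have "\<dots> = (\<integral>\<^sup>+\<omega>. of_nat (cbr d (R [] \<omega>)) \<partial>M) * m"
    by (rule nn_integral_multc[OF nat_fun_meas[OF root_T]])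
  also have "\<dots> = ennreal ((real d + 1) / real d) * ennreal (e - p0) * m"
    using int_cbr[OF d1] icb by simp
  finally show "1 + ennreal ((real d + 1) / real d) * ennreal (e - p0) * m \<le> (\<integral>\<^sup>+\<omega>. X [] \<omega> \<partial>M)"
    using gen[OF root_T] by simp
qed

end

context cone_setup begin

lemma upper_part:
  assumes d2: "2 \<le> d"
    and E: "(\<integral>\<^sup>+\<omega>. ennreal (real d ^ R [] \<omega>) \<partial>M) = ennreal e" and e1: "1 \<le> e"
    and b1: "real d * (e - 1) / (real d - 1) < 1"
  defines "b \<equiv> real d * (e - 1) / (real d - 1)"
  shows "(\<integral>\<^sup>+\<omega>. X [] \<omega> \<partial>M) \<le> 1 + ennreal ((real d + 1) / real d) * ennreal b * ennreal (1 / (1 - b))"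
proof -
  have d1: "1 \<le> d" using d2 by simp
  have b0: "0 \<le> b" unfolding b_def using d2 e1 by auto
  have b1': "b < 1" using b1 by (simp add: b_def)
  have icB: "(\<integral>\<^sup>+\<omega>. of_nat (cB d (R [] \<omega>)) \<partial>M) = ennreal b"
    unfolding b_def by (rule int_cB[OF d2 E e1])
  define K where "K = ennreal (1 / (1 - b))"
  define MN where "MN N = (SUP x\<in>Sub []. \<integral>\<^sup>+\<omega>. XN N x \<omega> \<partial>M)" for N
  have stepU: "(\<integral>\<^sup>+\<omega>. XN N u \<omega> \<partial>M) \<le> 1 + ennreal b * MN N" if u: "u \<in> Sub []" for u N
  proof -
    have uT: "u \<in> tree_vert d" "u \<noteq> []" using u by (auto simp: Sub0_iff)
    have sumup: "(\<Sum>x\<in>ballS d u k. \<integral>\<^sup>+\<omega>'. XN N x \<omega>' \<partial>M) \<le> of_nat (card (ballS d u k)) * MN N" for k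
      by (rule sum_bounded_above) (use ballS_Sub0 in \<open>auto simp: MN_def intro!: SUP_upper\<close>)
    have "(\<integral>\<^sup>+\<omega>. (\<Sum>x\<in>ballS d u (R u \<omega>). \<integral>\<^sup>+\<omega>'. XN N x \<omega>' \<partial>M) \<partial>M)
        \<le> (\<integral>\<^sup>+\<omega>. of_nat (card (ballS d u (R u \<omega>))) * MN N \<partial>M)"
      by (rule nn_integral_mono) (rule sumup)
    also have "\<dots> = (\<integral>\<^sup>+\<omega>. of_nat (cB d (R u \<omega>)) * MN N \<partial>M)"
      using card_ballS_nonroot[OF uT] by simp
    also have "\<dots> = (\<integral>\<^sup>+\<omega>. of_nat (cB d (R u \<omega>)) \<partial>M) * MN N"
      by (rule nn_integral_multc[OF nat_fun_meas[OF uT(1)]])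
    also have "(\<integral>\<^sup>+\<omega>. of_nat (cB d (R u \<omega>)) \<partial>M) = (\<integral>\<^sup>+\<omega>. of_nat (cB d (R [] \<omega>)) \<partial>M)"
      by (rule exp_distr[OF uT(1)])
    finally show ?thesis using upp_step[OF uT(1), of N] icB
      by (simp add: mult.commute) (meson add_left_mono order_trans)
  qed
  have MNK: "MN N \<le> K" for N
  proof -
    have "MN N \<le> 1 + ennreal b * MN N"
      unfolding MN_def[of N] by (rule SUP_least) (rule stepU[unfolded MN_def])
    moreover have "MN N \<le> of_nat (card {v \<in> tree_vert d. length v \<le> N})"
      unfolding MN_def by (rule SUP_least) (rule XN_bound, simp add: Sub0_iff)
    then have "MN N < \<top>" using of_nat_less_top order.strict_trans1 by blast
    ultimately show ?thesis unfolding K_def using b0 b1' by (rule fix_up)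
  qed
  have XK: "(\<integral>\<^sup>+\<omega>. X x \<omega> \<partial>M) \<le> K" if x: "x \<in> Sub []" for x
  proof -
    have xT: "x \<in> tree_vert d" using x by (simp add: Sub0_iff)
    show ?thesis unfolding X_SUP[OF xT]
    proof (rule SUP_least)
      fix N
      have "(\<integral>\<^sup>+\<omega>. XN N x \<omega> \<partial>M) \<le> MN N" unfolding MN_def by (rule SUP_upper[OF x])
      then show "(\<integral>\<^sup>+\<omega>. XN N x \<omega> \<partial>M) \<le> K" using MNK order_trans by blast
    qed
  qed
  have XNX: "(\<integral>\<^sup>+\<omega>. XN N x \<omega> \<partial>M) \<le> (\<integral>\<^sup>+\<omega>. X x \<omega> \<partial>M)" for N x
    by (rule nn_integral_mono) (auto simp: XN_def X_def intro!: emeasure_mono)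
  have rootN: "(\<integral>\<^sup>+\<omega>. XN N [] \<omega> \<partial>M) \<le> 1 + ennreal ((real d + 1) / real d) * ennreal b * K" for N
  proof -
    have sumup: "(\<Sum>x\<in>ballS d [] k. \<integral>\<^sup>+\<omega>'. XN N x \<omega>' \<partial>M) \<le> of_nat (card (ballS d [] k)) * K" for k
      by (rule sum_bounded_above) (use ballS_Sub0 XK XNX order_trans in blast)
    have "(\<integral>\<^sup>+\<omega>. (\<Sum>x\<in>ballS d [] (R [] \<omega>). \<integral>\<^sup>+\<omega>'. XN N x \<omega>' \<partial>M) \<partial>M)
        \<le> (\<integral>\<^sup>+\<omega>. of_nat (card (ballS d [] (R [] \<omega>))) * K \<partial>M)"
      by (rule nn_integral_mono) (rule sumup)
    also have "\<dots> = (\<integral>\<^sup>+\<omega>. of_nat (cBr d (R [] \<omega>)) * K \<partial>M)"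
      using card_ballS_root by simp
    also have "\<dots> = (\<integral>\<^sup>+\<omega>. of_nat (cBr d (R [] \<omega>)) \<partial>M) * K"
      by (rule nn_integral_multc[OF nat_fun_meas[OF root_T]])
    also have "\<dots> = ennreal ((real d + 1) / real d) * ennreal b * K"
      using int_cBr[OF d1] icB by simp
    finally show ?thesis using upp_step[OF root_T, of N]
      by (meson add_left_mono order_trans)
  qed
  show ?thesis unfolding X_SUP[OF root_T] K_def[symmetric]
    by (rule SUP_least) (rule rootN)
qed




end

lemma arith_up:
  fixes x e :: real
  assumes "1 < x" "0 < 2*x - 1 - x*e"
  shows "1 + (x+1)/x * (x*(e-1)/(x-1)) * (1/(1 - x*(e-1)/(x-1))) = (e + x - 2)/(2*x - 1 - x*e)"
proof -
  define D where "D = 2*x - 1 - x*e"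
  have D0: "D \<noteq> 0" using assms by (simp add: D_def)
  have omb: "1 - x*(e-1)/(x-1) = D/(x-1)" using assms by (simp add: field_simps D_def)
  have "(x+1)/x * (x*(e-1)/(x-1)) * (1/(1 - x*(e-1)/(x-1))) = (x+1)/x * (x*(e-1)/(x-1)) * ((x-1)/D)"
    unfolding omb by simp
  also have "\<dots> = (x+1)*(e-1)/D" using assms D0 by (simp add: field_simps)
  finally have "1 + (x+1)/x * (x*(e-1)/(x-1)) * (1/(1 - x*(e-1)/(x-1))) = 1 + (x+1)*(e-1)/D" by simp
  also have "\<dots> = (D + (x+1)*(e-1))/D" using D0 by (simp add: field_simps)
  also have "D + (x+1)*(e-1) = e + x - 2" by (simp add: algebra_simps D_def)
  finally show ?thesis by (simp add: D_def)
qed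

theorem theorem1:
  fixes d :: nat and M :: "'a measure" and R :: "nat list \<Rightarrow> 'a \<Rightarrow> nat"
  assumes "d \<ge> 1"
    and "prob_space M"
    and "prob_space.indep_vars M (\<lambda>_. count_space UNIV) R (tree_vert d)"
    and "\<forall>v\<in>tree_vert d. distr M (count_space UNIV) (R v) = distr M (count_space UNIV) (R [])"
    and "0 < measure M {\<omega>\<in>space M. R [] \<omega> = 0}" and "measure M {\<omega>\<in>space M. R [] \<omega> = 0} < 1"
    and "(\<integral>\<^sup>+\<omega>. ennreal (real d ^ R [] \<omega>) \<partial>M) < ennreal (2 - 1 / real d)"
  shows "let e = enn2real (\<integral>\<^sup>+\<omega>. ennreal (real d ^ R [] \<omega>) \<partial>M);
             p0 = measure M {\<omega>\<in>space M. R [] \<omega> = 0};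
             EI = (\<integral>\<^sup>+\<omega>. emeasure (count_space (tree_vert d)) (cone_reached d (\<lambda>v. R v \<omega>)) \<partial>M)
         in ennreal ((real d + e - p0) / (real d * (1 - e + p0))) \<le> EI
          \<and> EI \<le> ennreal ((e + real d - 2) / (2 * real d - 1 - real d * e))"
proof -
  interpret cone_setup M d R
    by (intro cone_setup.intro cone_setup_axioms.intro) (use assms in auto)
  have d1: "1 \<le> d" using assms(1) .
  define E where "E = (\<integral>\<^sup>+\<omega>. ennreal (real d ^ R [] \<omega>) \<partial>M)"
  define p0 where "p0 = measure M {\<omega>\<in>space M. R [] \<omega> = 0}"
  have p0: "0 < p0" "p0 < 1" using assms(5,6) by (simp_all add: p0_def)
  have "E < \<top>" using assms(7) unfolding E_def using order.strict_trans by fastforce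
  then obtain e where Ee: "E = ennreal e" and e0: "0 \<le> e" by (cases E) auto
  have ee: "enn2real E = e" using Ee e0 by simp
  have e1: "1 \<le> e" using E_ge1[OF d1] Ee e0 unfolding E_def by simp
  have elt: "e < 2 - 1 / real d" using assms(7) Ee e0 unfolding E_def by (simp add: ennreal_less_iff)
  have d2: "2 \<le> d"
  proof (rule ccontr)
    assume "\<not> 2 \<le> d" then have "d = 1" using d1 by simp
    then show False using elt e1 by simp
  qed
  have EI: "(\<integral>\<^sup>+\<omega>. emeasure (count_space (tree_vert d)) (cone_reached d (\<lambda>v. R v \<omega>)) \<partial>M) = (\<integral>\<^sup>+\<omega>. X [] \<omega> \<partial>M)"
  proof (rule nn_integral_cong)
    fix \<omega>
    have sub: "creach d (\<lambda>v. R v \<omega>) [] \<subseteq> tree_vert d" using creach_sub[OF root_T] by blast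
    show "emeasure (count_space (tree_vert d)) (cone_reached d (\<lambda>v. R v \<omega>)) = X [] \<omega>"
      unfolding X_def cone_reached_creach
      by (simp add: emeasure_count_space[OF sub])
  qed
  have Ed: "(\<integral>\<^sup>+\<omega>. ennreal (real d ^ R [] \<omega>) \<partial>M) = ennreal e" using Ee E_def by simp
  have low: "ennreal ((real d + e - p0) / (real d * (1 - e + p0))) \<le> (\<integral>\<^sup>+\<omega>. X [] \<omega> \<partial>M)"
  proof (cases "1 \<le> e - p0")
    case True
    have "(real d + e - p0) / (real d * (1 - e + p0)) \<le> 0"
      using True d1 e1 p0 by (intro divide_nonneg_nonpos mult_nonneg_nonpos) auto
    then show ?thesis by (simp add: ennreal_neg)
  next
    case False
    define m where "m = (INF x\<in>Sub []. \<integral>\<^sup>+\<omega>. X x \<omega> \<partial>M)"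
    have a0: "0 \<le> e - p0" using e1 p0 by simp
    have L1: "1 + ennreal (e - p0) * m \<le> m"
      unfolding m_def p0_def by (rule lower_part(1)[OF d1 Ed e1])
    have L2: "1 + ennreal ((real d + 1) / real d) * ennreal (e - p0) * m \<le> (\<integral>\<^sup>+\<omega>. X [] \<omega> \<partial>M)"
      unfolding m_def p0_def by (rule lower_part(2)[OF d1 Ed e1])
    have mK: "ennreal (1 / (1 - (e - p0))) \<le> m"
      by (rule fix_low[OF L1 a0]) (use False in simp)
    have "1 + ennreal ((real d + 1) / real d) * ennreal (e - p0) * ennreal (1 / (1 - (e - p0)))
        \<le> 1 + ennreal ((real d + 1) / real d) * ennreal (e - p0) * m"
      by (intro add_left_mono mult_left_mono mK) auto
    also note L2
    finally have *: "1 + ennreal ((real d + 1) / real d) * ennreal (e - p0) * ennreal (1 / (1 - (e - p0)))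
        \<le> (\<integral>\<^sup>+\<omega>. X [] \<omega> \<partial>M)" .
    have "1 + ennreal ((real d + 1) / real d) * ennreal (e - p0) * ennreal (1 / (1 - (e - p0)))
        = ennreal (1 + (real d + 1) / real d * (e - p0) * (1 / (1 - (e - p0))))"
      using a0 False by (simp add: ennreal_mult[symmetric])
    also have "1 + (real d + 1) / real d * (e - p0) * (1 / (1 - (e - p0))) = (real d + e - p0) / (real d * (1 - e + p0))"
    proof -
      have gen: "1 + (x + 1) / x * a * (1 / (1 - a)) = (x + a) / (x * (1 - a))" if "0 < x" "a < 1" for x a :: real
        using that by (simp add: field_simps)
      have "1 + (real d + 1) / real d * (e - p0) * (1 / (1 - (e - p0))) = (real d + (e - p0)) / (real d * (1 - (e - p0)))"
        by (rule gen) (use d1 False in auto)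
      then show ?thesis by (simp add: algebra_simps)
    qed
    finally show ?thesis using * by simp
  qed
  define b where "b = real d * (e - 1) / (real d - 1)"
  have b1: "b < 1"
  proof -
    have "real d * e < 2 * real d - 1" using elt d1 by (simp add: field_simps)
    then have "real d * (e - 1) < real d - 1" by (simp add: algebra_simps)
    then show ?thesis unfolding b_def using d2 by (simp add: divide_less_eq)
  qed
  have b0: "0 \<le> b" unfolding b_def using d2 e1 by auto
  have U: "(\<integral>\<^sup>+\<omega>. X [] \<omega> \<partial>M) \<le> 1 + ennreal ((real d + 1) / real d) * ennreal b * ennreal (1 / (1 - b))"
    unfolding b_def by (rule upper_part[OF d2 Ed e1]) (use b1 b_def in simp)
  have "1 + ennreal ((real d + 1) / real d) * ennreal b * ennreal (1 / (1 - b))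
      = ennreal (1 + (real d + 1) / real d * b * (1 / (1 - b)))"
    using b0 b1 by (simp add: ennreal_mult[symmetric])
  also have "1 + (real d + 1) / real d * b * (1 / (1 - b)) = (e + real d - 2) / (2 * real d - 1 - real d * e)"
    unfolding b_def by (rule arith_up) (use elt d2 in \<open>auto simp: field_simps\<close>)
  finally have upp: "(\<integral>\<^sup>+\<omega>. X [] \<omega> \<partial>M) \<le> ennreal ((e + real d - 2) / (2 * real d - 1 - real d * e))"
    using U by simp
  show ?thesis
    unfolding Let_def EI E_def[symmetric] p0_def[symmetric] ee using low upp by simp
qed


end
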